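(* Let $(X,T)$ be a topological dynamical system and let $K$ be a compact subset of $X$. Then $K$ has bounded topological complexity with respect to $\{\hat d_n\}$ if and only if $K$ is equicontinuous in the mean.
   Context: A t.d.s. $(X,T)$ consists of a compact metric space $(X,d)$ and a continuous map $T\colon X\to X$. For $n\in\mathbb{N}$ and $x,y\in X$ let $\bar d_n(x,y)=\frac1n\sum_{i=0}^{n-1}d(T^ix,T^iy)$ and $\hat d_n(x,y)=\max\{\bar d_k(x,y)\colon 1\le k\le n\}$; $B_{\hat d_n}(x,\varepsilon)=\{y\colon \hat d_n(x,y)<\varepsilon\}$. For $K\subset X$, $\widehat{\mathrm{span}}_K(n,\varepsilon)=\min\{\#(F)\colon F\subset K,\ K\subset\bigcup_{x\in F}B_{\hat d_n}(x,\varepsilon)\}$. $K$ has bounded topological complexity with respect to $\{\hat d_n\}$ if for every $\varepsilon>0$ there is a positive integer $C$ with $\widehat{\mathrm{span}}_K(n,\varepsilon)\le C$ for all $n\ge1$. $K$ is equicontinuous in the mean if for every $\varepsilon>0$ there is $\delta>0$ such that $\hat d_n(x,y)<\varepsilon$ for all $n\ge1$ and all $x,y\in K$ with $d(x,y)<\delta$. *)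

theory Defs
  imports "HOL-Analysis.Analysis"
begin

definition tds :: "'a::metric_space set \<Rightarrow> ('a \<Rightarrow> 'a) \<Rightarrow> bool" where
  "tds X T \<longleftrightarrow> compact X \<and> continuous_on X T \<and> T ` X \<subseteq> X"

definition dbar :: "('a::metric_space \<Rightarrow> 'a) \<Rightarrow> nat \<Rightarrow> 'a \<Rightarrow> 'a \<Rightarrow> real" where
  "dbar T n x y = (1 / real n) * (\<Sum>i<n. dist ((T ^^ i) x) ((T ^^ i) y))"

definition dhat :: "('a::metric_space \<Rightarrow> 'a) \<Rightarrow> nat \<Rightarrow> 'a \<Rightarrow> 'a \<Rightarrow> real" where
  "dhat T n x y = Max ((\<lambda>k. dbar T k x y) ` {1..n})"

definition ball_dhat :: "('a::metric_space \<Rightarrow> 'a) \<Rightarrow> nat \<Rightarrow> 'a \<Rightarrow> real \<Rightarrow> 'a set" where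
  "ball_dhat T n x e = {y. dhat T n x y < e}"

definition span_hat :: "('a::metric_space \<Rightarrow> 'a) \<Rightarrow> 'a set \<Rightarrow> nat \<Rightarrow> real \<Rightarrow> nat" where
  "span_hat T K n e = (LEAST m. \<exists>F. F \<subseteq> K \<and> finite F \<and> card F = m \<and>
       K \<subseteq> (\<Union>x\<in>F. ball_dhat T n x e))"

text \<open>Bounded topological complexity. We require explicitly that a finite spanning set exists
  (so that the minimum is attained) together with the bound on its minimal size.\<close>
definition bounded_complexity :: "('a::metric_space \<Rightarrow> 'a) \<Rightarrow> 'a set \<Rightarrow> bool" where
  "bounded_complexity T K \<longleftrightarrow> (\<forall>e>0. \<exists>C::nat. C > 0 \<and> (\<forall>n\<ge>1.
      (\<exists>F. F \<subseteq> K \<and> finite F \<and> K \<subseteq> (\<Union>x\<in>F. ball_dhat T n x e)) \<and>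
      span_hat T K n e \<le> C))"

definition equicontinuous_in_mean :: "('a::metric_space \<Rightarrow> 'a) \<Rightarrow> 'a set \<Rightarrow> bool" where
  "equicontinuous_in_mean T K \<longleftrightarrow> (\<forall>e>0. \<exists>d>0. \<forall>n\<ge>1. \<forall>x\<in>K. \<forall>y\<in>K.
      dist x y < d \<longrightarrow> dhat T n x y < e)"

end

theory Submission
  imports Defs
begin

lemma dbar_nonneg: "dbar T k x y \<ge> 0"
  unfolding dbar_def by (simp add: sum_nonneg)

lemma dbar_sym: "dbar T k x y = dbar T k y x"
  unfolding dbar_def by (simp add: dist_commute)

lemma dbar_tri: "dbar T k x y \<le> dbar T k x z + dbar T k z y"
proof -
  have "(\<Sum>i<k. dist ((T ^^ i) x) ((T ^^ i) y)) \<le> (\<Sum>i<k. dist ((T ^^ i) x) ((T ^^ i) z) + dist ((T ^^ i) z) ((T ^^ i) y))"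
    by (intro sum_mono dist_triangle)
  then show ?thesis unfolding dbar_def
    by (simp add: sum.distrib add_divide_distrib[symmetric] divide_right_mono)
qed

lemma dbar_self: "dbar T k x x = 0"
  unfolding dbar_def by simp

lemma dhat_ge: "1 \<le> k \<Longrightarrow> k \<le> n \<Longrightarrow> dbar T k x y \<le> dhat T n x y"
  unfolding dhat_def by (intro Max_ge) auto

lemma dhat_attain: "1 \<le> n \<Longrightarrow> \<exists>k. 1 \<le> k \<and> k \<le> n \<and> dhat T n x y = dbar T k x y"
proof -
  assume "1 \<le> n"
  then have "dhat T n x y \<in> (\<lambda>k. dbar T k x y) ` {1..n}"
    unfolding dhat_def by (intro Max_in) auto
  then show ?thesis by auto
qed

lemma dhat_nonneg: "1 \<le> n \<Longrightarrow> dhat T n x y \<ge> 0"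
  using dhat_attain dbar_nonneg by metis

lemma dhat_sym: "dhat T n x y = dhat T n y x"
  unfolding dhat_def by (simp add: dbar_sym)

lemma dhat_self: "1 \<le> n \<Longrightarrow> dhat T n x x = 0"
  using dhat_attain dbar_self by metis

lemma dhat_tri: "1 \<le> n \<Longrightarrow> dhat T n x y \<le> dhat T n x z + dhat T n z y"
proof -
  assume n: "1 \<le> n"
  then obtain k where k: "1 \<le> k" "k \<le> n" "dhat T n x y = dbar T k x y" using dhat_attain by blast
  have "dbar T k x y \<le> dbar T k x z + dbar T k z y" by (rule dbar_tri)
  also have "\<dots> \<le> dhat T n x z + dhat T n z y" using k by (intro add_mono dhat_ge) auto
  finally show ?thesis using k by simp
qed

lemma dhat_mono: "1 \<le> n \<Longrightarrow> n \<le> m \<Longrightarrow> dhat T n x y \<le> dhat T m x y"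
  using dhat_attain dhat_ge by (metis order_trans)

lemma dhat_le_sum: "1 \<le> n \<Longrightarrow> dhat T n x y \<le> (\<Sum>i<n. dist ((T ^^ i) x) ((T ^^ i) y))"
proof -
  assume n: "1 \<le> n"
  then obtain k where k: "1 \<le> k" "k \<le> n" "dhat T n x y = dbar T k x y" using dhat_attain by blast
  have "dbar T k x y \<le> (\<Sum>i<k. dist ((T ^^ i) x) ((T ^^ i) y))"
  proof -
    have s: "0 \<le> (\<Sum>i<k. dist ((T ^^ i) x) ((T ^^ i) y))" by (simp add: sum_nonneg)
    have "1 \<le> real k" using k by simp
    from mult_right_mono[OF this s] show ?thesis
      unfolding dbar_def using k by (simp add: divide_le_eq mult.commute)
  qed
  also have "\<dots> \<le> (\<Sum>i<n. dist ((T ^^ i) x) ((T ^^ i) y))"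
    using k by (intro sum_mono2) auto
  finally show ?thesis using k by simp
qed


lemma iter_cont:
  assumes "tds X T"
  shows "continuous_on X (T ^^ i) \<and> (T ^^ i) ` X \<subseteq> X"
proof (induction i)
  case 0
  then show ?case by (simp add: continuous_on_id)
next
  case (Suc i)
  have c: "continuous_on X T" "T ` X \<subseteq> X" using assms unfolding tds_def by auto
  have "continuous_on X (T \<circ> (T ^^ i))"
    using Suc c by (intro continuous_on_compose) (auto intro: continuous_on_subset)
  moreover have "(T \<circ> (T ^^ i)) ` X \<subseteq> X" using Suc c by auto
  ultimately show ?case by simp
qed

lemma dhat_cont:
  assumes "tds X T" "x \<in> X" "1 \<le> n" "0 < \<delta>"
  shows "\<exists>d>0. \<forall>y\<in>X. dist y x < d \<longrightarrow> dhat T n x y < \<delta>"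
proof -
  define f where "f y = (\<Sum>i<n. dist ((T ^^ i) x) ((T ^^ i) y))" for y
  have "continuous_on X f"
    unfolding f_def using iter_cont[OF assms(1)]
    by (intro continuous_on_sum continuous_on_dist continuous_on_const) auto
  then obtain d where d: "d > 0" "\<forall>y\<in>X. dist y x < d \<longrightarrow> dist (f y) (f x) < \<delta>"
    using assms(2,4) unfolding continuous_on_iff by blast
  have fx: "f x = 0" unfolding f_def by simp
  have "\<forall>y\<in>X. dist y x < d \<longrightarrow> dhat T n x y < \<delta>"
  proof (intro ballI impI)
    fix y assume "y \<in> X" "dist y x < d"
    then have "dist (f y) 0 < \<delta>" using d fx by auto
    moreover have "f y \<ge> 0" unfolding f_def by (simp add: sum_nonneg)
    moreover have "dhat T n x y \<le> f y" unfolding f_def by (rule dhat_le_sum[OF assms(3)])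
    ultimately show "dhat T n x y < \<delta>" by (simp add: dist_real_def)
  qed
  then show ?thesis using d by blast
qed

lemma separation:
  assumes "tds X T" "K \<subseteq> X" "x \<in> K" "e > 0"
    and H: "\<forall>d>0. \<exists>y\<in>K. dist y x < d \<and> (\<exists>n\<ge>1. dhat T n x y \<ge> e)"
  shows "\<exists>N\<ge>1. \<exists>S\<subseteq>K. finite S \<and> card S = k \<and> (\<forall>u\<in>S. dhat T N x u \<ge> e)
           \<and> (\<forall>u\<in>S. \<forall>w\<in>S. u \<noteq> w \<longrightarrow> dhat T N u w \<ge> e/2)"
proof (induction k)
  case 0
  have "(1::nat) \<ge> 1 \<and> {} \<subseteq> K \<and> finite {} \<and> card {} = (0::nat) \<and> (\<forall>u\<in>{}. dhat T 1 x u \<ge> e)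
           \<and> (\<forall>u\<in>{}. \<forall>w\<in>{}. u \<noteq> w \<longrightarrow> dhat T 1 u w \<ge> e/2)" by simp
  then show ?case by blast
next
  case (Suc k)
  from Suc.IH obtain N S where N: "N \<ge> 1" and S: "S \<subseteq> K" "finite S" "card S = k"
    "\<forall>u\<in>S. dhat T N x u \<ge> e" "\<forall>u\<in>S. \<forall>w\<in>S. u \<noteq> w \<longrightarrow> dhat T N u w \<ge> e/2"
    by (elim exE conjE) (rule that)
  obtain d where d: "d > 0" "\<forall>y\<in>X. dist y x < d \<longrightarrow> dhat T N x y < e/4"
    using dhat_cont[OF assms(1) _ N, of x "e/4"] assms(2,3,4) by (meson divide_pos_pos subsetD zero_less_numeral)
  obtain y n where y: "y \<in> K" "dist y x < d" "n \<ge> 1" "dhat T n x y \<ge> e"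
    using H d(1) by blast
  have yN: "dhat T N x y < e/4" using d(2) y(1,2) assms(2) by blast
  define N' where "N' = max N n"
  have N'1: "N' \<ge> 1" "N \<le> N'" "n \<le> N'" using N unfolding N'_def by auto
  have yS: "y \<notin> S"
  proof
    assume "y \<in> S"
    then have "dhat T N x y \<ge> e" using S(4) by blast
    then show False using yN assms(4) by linarith
  qed
  have far: "dhat T N' u y \<ge> e/2" if "u \<in> S" for u
  proof -
    have "dhat T N x u \<le> dhat T N x y + dhat T N y u" by (rule dhat_tri[OF N])
    moreover have "dhat T N x u \<ge> e" using S(4) that by blast
    moreover have "dhat T N y u = dhat T N u y" by (rule dhat_sym)
    ultimately have "dhat T N u y \<ge> e/2" using yN assms(4) by linarith
    then show ?thesis using dhat_mono[OF N N'1(2), of T u y] by linarith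
  qed
  have m: "dhat T N a b \<le> dhat T N' a b" for a b using dhat_mono[OF N N'1(2)] .
  show ?case
  proof (intro exI[of _ N'] conjI N'1(1) exI[of _ "insert y S"])
    show "insert y S \<subseteq> K" using S y by auto
    show "finite (insert y S)" using S by auto
    show "card (insert y S) = Suc k" using S yS by auto
    show "\<forall>u\<in>insert y S. e \<le> dhat T N' x u"
    proof
      fix u assume "u \<in> insert y S"
      then consider "u = y" | "u \<in> S" by blast
      then show "e \<le> dhat T N' x u"
      proof cases
        case 1
        then show ?thesis using y(4) dhat_mono[OF y(3) N'1(3), of T x y] by (metis order_trans)
      next
        case 2
        then show ?thesis using S(4) m[of x u] by fastforce
      qed
    qed
    show "\<forall>u\<in>insert y S. \<forall>w\<in>insert y S. u \<noteq> w \<longrightarrow> e / 2 \<le> dhat T N' u w"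
    proof (intro ballI impI)
      fix u w assume u: "u \<in> insert y S" and w: "w \<in> insert y S" and uw: "u \<noteq> w"
      show "e / 2 \<le> dhat T N' u w"
      proof (cases "u = y")
        case True
        then have "w \<in> S" using w uw by blast
        then show ?thesis using far[of w] True by (simp add: dhat_sym)
      next
        case False
        then have u': "u \<in> S" using u by blast
        show ?thesis
        proof (cases "w = y")
          case True
          then show ?thesis using far[OF u'] by simp
        next
          case False
          then have "w \<in> S" using w by blast
          then have "e/2 \<le> dhat T N u w" using S(5) u' uw by blast
          then show ?thesis using m[of u w] by linarith
        qed
      qed
    qed
  qed
qed

theorem mainTheorem3:
  fixes X K :: "'a::metric_space set" and T :: "'a \<Rightarrow> 'a"
  assumes "tds X T" and "K \<subseteq> X" and "compact K"
  shows "bounded_complexity T K \<longleftrightarrow> equicontinuous_in_mean T K"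
proof
  assume bc: "bounded_complexity T K"
  have pw: "\<exists>d>0. \<forall>y\<in>K. dist y x < d \<longrightarrow> (\<forall>n\<ge>1. dhat T n x y < e)"
    if x: "x \<in> K" and e: "e > 0" for x e
  proof (rule ccontr)
    assume neg: "\<not> ?thesis"
    have H: "\<forall>d>0. \<exists>y\<in>K. dist y x < d \<and> (\<exists>n\<ge>1. dhat T n x y \<ge> e)"
    proof (intro allI impI)
      fix d :: real assume "d > 0"
      with neg obtain y where y: "y \<in> K" "dist y x < d" "\<not> (\<forall>n\<ge>1. dhat T n x y < e)"
        by blast
      then obtain n where "n \<ge> 1" "dhat T n x y \<ge> e" by (auto simp: not_less)
      then show "\<exists>y\<in>K. dist y x < d \<and> (\<exists>n\<ge>1. dhat T n x y \<ge> e)" using y by blast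
    qed
    obtain C :: nat where C: "\<forall>n\<ge>1. (\<exists>F. F \<subseteq> K \<and> finite F \<and> K \<subseteq> (\<Union>x\<in>F. ball_dhat T n x (e/4)))
        \<and> span_hat T K n (e/4) \<le> C"
    proof -
      have "e/4 > 0" using e by simp
      from bc[unfolded bounded_complexity_def, rule_format, OF this] obtain C :: nat where
        "C > 0 \<and> (\<forall>n\<ge>1. (\<exists>F. F \<subseteq> K \<and> finite F \<and> K \<subseteq> (\<Union>x\<in>F. ball_dhat T n x (e/4)))
        \<and> span_hat T K n (e/4) \<le> C)" by (elim exE)
      then show ?thesis using that by blast
    qed
    obtain N S where N: "N \<ge> 1" and S: "S \<subseteq> K" "finite S" "card S = Suc C"
      "\<forall>u\<in>S. dhat T N x u \<ge> e" "\<forall>u\<in>S. \<forall>w\<in>S. u \<noteq> w \<longrightarrow> dhat T N u w \<ge> e/2"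
      using separation[OF assms(1,2) x e H, of "Suc C"] by (elim exE conjE) (rule that)
    have "\<exists>F. F \<subseteq> K \<and> finite F \<and> K \<subseteq> (\<Union>x\<in>F. ball_dhat T N x (e/4))"
      using C N by simp
    then obtain F0 where F0: "F0 \<subseteq> K" "finite F0" "K \<subseteq> (\<Union>x\<in>F0. ball_dhat T N x (e/4))"
      by (elim exE conjE) (rule that)
    have ex: "\<exists>m F. F \<subseteq> K \<and> finite F \<and> card F = m \<and> K \<subseteq> (\<Union>x\<in>F. ball_dhat T N x (e/4))"
      using F0 by (intro exI[of _ "card F0"] exI[of _ F0]) simp
    have "\<exists>F. F \<subseteq> K \<and> finite F \<and> card F = span_hat T K N (e/4) \<and> K \<subseteq> (\<Union>x\<in>F. ball_dhat T N x (e/4))"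
      unfolding span_hat_def by (rule LeastI_ex[OF ex])
    then obtain F where F: "F \<subseteq> K" "finite F" "card F = span_hat T K N (e/4)"
      "K \<subseteq> (\<Union>x\<in>F. ball_dhat T N x (e/4))"
      by (elim exE conjE) (rule that)
    have cF: "card F \<le> C" using F(3) C N by simp
    have "\<forall>u\<in>S. \<exists>z\<in>F. dhat T N z u < e/4"
      using F(4) S(1) unfolding ball_dhat_def by blast
    then obtain g where g: "\<forall>u\<in>S. g u \<in> F \<and> dhat T N (g u) u < e/4"
      using bchoice[of S "\<lambda>u z. z \<in> F \<and> dhat T N z u < e/4"] by blast
    have gS: "g ` S \<subseteq> F" using g by blast
    have "card (g ` S) \<le> card F" using gS F(2) by (rule card_mono[rotated])
    then have "card (g ` S) < card S" using S(3) cF by linarith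
    then have "\<not> inj_on g S" by (rule pigeonhole)
    then obtain u w where uw: "u \<in> S" "w \<in> S" "u \<noteq> w" "g u = g w"
      unfolding inj_on_def by blast
    have "dhat T N u w \<le> dhat T N u (g u) + dhat T N (g u) w" by (rule dhat_tri[OF N])
    moreover have "dhat T N u (g u) = dhat T N (g u) u" by (rule dhat_sym)
    moreover have "dhat T N (g u) u < e/4" using g uw(1) by blast
    moreover have "dhat T N (g u) w < e/4" using g uw(2) uw(4) by simp
    ultimately have "dhat T N u w < e/2" by linarith
    moreover have "dhat T N u w \<ge> e/2" using S(5) uw(1-3) by blast
    ultimately show False by linarith
  qed
  define \<F> where "\<F> = {(\<lambda>y. dhat T n z y) | n z. n \<ge> 1}"
  have cont: "\<exists>\<delta>. 0 < \<delta> \<and> (\<forall>f \<in> \<F>. \<forall>x' \<in> K. dist x' x < \<delta> \<longrightarrow> dist (f x') (f x) < \<epsilon>)"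
    if xK: "x \<in> K" and eps: "0 < \<epsilon>" for x \<epsilon>
  proof -
    obtain d where d: "d > 0" "\<forall>y\<in>K. dist y x < d \<longrightarrow> (\<forall>n\<ge>1. dhat T n x y < \<epsilon>)"
      using pw[OF xK eps] by blast
    have "\<forall>f \<in> \<F>. \<forall>x' \<in> K. dist x' x < d \<longrightarrow> dist (f x') (f x) < \<epsilon>"
    proof (intro ballI impI)
      fix f x' assume f: "f \<in> \<F>" and x': "x' \<in> K" "dist x' x < d"
      then obtain n z where nz: "n \<ge> 1" "f = (\<lambda>y. dhat T n z y)" unfolding \<F>_def by blast
      have "dhat T n z x' \<le> dhat T n z x + dhat T n x x'" by (rule dhat_tri[OF nz(1)])
      moreover have "dhat T n z x \<le> dhat T n z x' + dhat T n x' x" by (rule dhat_tri[OF nz(1)])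
      moreover have "dhat T n x x' < \<epsilon>" using d x' nz by auto
      ultimately show "dist (f x') (f x) < \<epsilon>" using nz by (auto simp: dist_real_def dhat_sym)
    qed
    then show ?thesis using d by blast
  qed
  show "equicontinuous_in_mean T K"
    unfolding equicontinuous_in_mean_def
  proof (intro allI impI)
    fix e :: real assume e: "e > 0"
    obtain \<delta> where \<delta>: "0 < \<delta>"
      "\<And>f x x'. \<lbrakk>f \<in> \<F>; x \<in> K; x' \<in> K; dist x' x < \<delta>\<rbrakk> \<Longrightarrow> dist (f x') (f x) < e"
      using compact_uniformly_equicontinuous[OF assms(3) cont e] by blast
    have "\<forall>n\<ge>1. \<forall>x\<in>K. \<forall>y\<in>K. dist x y < \<delta> \<longrightarrow> dhat T n x y < e"
    proof (intro allI impI ballI)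
      fix n :: nat and x y assume n: "1 \<le> n" and xy: "x \<in> K" "y \<in> K" "dist x y < \<delta>"
      have "(\<lambda>y. dhat T n x y) \<in> \<F>" using n unfolding \<F>_def by blast
      have z: "dhat T n x x = 0" by (rule dhat_self[OF n])
      have "dist y x < \<delta>" using xy(3) by (simp add: dist_commute)
      from \<delta>(2)[OF \<open>(\<lambda>y. dhat T n x y) \<in> \<F>\<close> xy(1,2) this] show "dhat T n x y < e"
        using z by (simp add: dist_real_def)
    qed
    then show "\<exists>d>0. \<forall>n\<ge>1. \<forall>x\<in>K. \<forall>y\<in>K. dist x y < d \<longrightarrow> dhat T n x y < e"
      using \<delta>(1) by blast
  qed
next
  assume eq: "equicontinuous_in_mean T K"
  show "bounded_complexity T K"
    unfolding bounded_complexity_def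
  proof (intro allI impI)
    fix e :: real assume e: "e > 0"
    obtain d where d: "d > 0" "\<forall>n\<ge>1. \<forall>x\<in>K. \<forall>y\<in>K. dist x y < d \<longrightarrow> dhat T n x y < e"
      using eq[unfolded equicontinuous_in_mean_def, rule_format, OF e] by (elim exE conjE) (rule that)
    obtain F where F: "finite F" "F \<subseteq> K" "K \<subseteq> (\<Union>x\<in>F. ball x d)"
      using seq_compact_imp_totally_bounded[OF compact_imp_seq_compact[OF assms(3)], rule_format, OF d(1)]
      by (elim exE conjE) (rule that)
    have cov: "K \<subseteq> (\<Union>x\<in>F. ball_dhat T n x e)" if n: "n \<ge> 1" for n :: nat
    proof
      fix y assume y: "y \<in> K"
      then obtain x where x: "x \<in> F" "dist x y < d" using F(3) by auto
      have "x \<in> K" using x(1) F(2) by blast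
      then have "dhat T n x y < e" using d(2) n y x(2) by blast
      then have "y \<in> ball_dhat T n x e" unfolding ball_dhat_def by simp
      then show "y \<in> (\<Union>x\<in>F. ball_dhat T n x e)" using x(1) by blast
    qed
    have main: "(\<exists>F. F \<subseteq> K \<and> finite F \<and> K \<subseteq> (\<Union>x\<in>F. ball_dhat T n x e)) \<and>
      span_hat T K n e \<le> card F + 1" if n: "n \<ge> 1" for n :: nat
    proof
      show "\<exists>F. F \<subseteq> K \<and> finite F \<and> K \<subseteq> (\<Union>x\<in>F. ball_dhat T n x e)"
        using F(1,2) cov[OF n] by blast
      have "\<exists>G. G \<subseteq> K \<and> finite G \<and> card G = card F \<and> K \<subseteq> (\<Union>x\<in>G. ball_dhat T n x e)"
        using F(1,2) cov[OF n] by blast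
      then have "span_hat T K n e \<le> card F"
        unfolding span_hat_def by (rule Least_le)
      then show "span_hat T K n e \<le> card F + 1" by simp
    qed
    show "\<exists>C::nat. C > 0 \<and> (\<forall>n\<ge>1. (\<exists>F. F \<subseteq> K \<and> finite F \<and> K \<subseteq> (\<Union>x\<in>F. ball_dhat T n x e)) \<and>
      span_hat T K n e \<le> C)"
      using main by (intro exI[of _ "card F + 1"]) simp
  qed
qed

end
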